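(* Let $G$ be a finite group with $Z(G)=I$, and suppose there is an integer $n_0\ge 3$ such that $l^i(D_1,\dots,D_n)\ge1$ for all class vectors $(D_1,\dots,D_n)$ of $G$ of length $n\in\{n_0,n_0+1,\dots,2n_0-1\}$. Then $$l^i(C_1,\dots,C_m)\ge |G|^{k-1}$$ for every class vector $(C_1,\dots,C_m)$ of $G$ of length $m=k\cdot n_0+l$ with $l\in\{0,1,\dots,n_0-1\}$ and $k\ge2$.
   Context: $I$ is the trivial group and $\iota$ the identity. A class vector of length $k$ is a tuple of $k$ non-trivial conjugacy classes. $\Sigma^i(C_1,\dots,C_k)$ is the set of $G$-conjugacy classes (simultaneous conjugation) of tuples $(\sigma_1,\dots,\sigma_k)$ with $\sigma_j\in C_j$, $\langle\sigma_1,\dots,\sigma_k\rangle=G$, $\sigma_1\cdots\sigma_k=\iota$, and $l^i(C_1,\dots,C_k)=|\Sigma^i(C_1,\dots,C_k)|$. *)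

theory Defs
  imports "HOL-Algebra.Algebra"
begin

definition group_center :: "('a, 'b) monoid_scheme \<Rightarrow> 'a set" where
  "group_center G = {z \<in> carrier G. \<forall>x \<in> carrier G. z \<otimes>\<^bsub>G\<^esub> x = x \<otimes>\<^bsub>G\<^esub> z}"

definition conj_class :: "('a, 'b) monoid_scheme \<Rightarrow> 'a \<Rightarrow> 'a set" where
  "conj_class G x = {g \<otimes>\<^bsub>G\<^esub> x \<otimes>\<^bsub>G\<^esub> inv\<^bsub>G\<^esub> g | g. g \<in> carrier G}"

definition nontriv_class :: "('a, 'b) monoid_scheme \<Rightarrow> 'a set \<Rightarrow> bool" where
  "nontriv_class G C \<longleftrightarrow> (\<exists>x \<in> carrier G. x \<noteq> \<one>\<^bsub>G\<^esub> \<and> C = conj_class G x)"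

definition class_vector :: "('a, 'b) monoid_scheme \<Rightarrow> 'a set list \<Rightarrow> bool" where
  "class_vector G Cs \<longleftrightarrow> (\<forall>C \<in> set Cs. nontriv_class G C)"

definition list_prod :: "('a, 'b) monoid_scheme \<Rightarrow> 'a list \<Rightarrow> 'a" where
  "list_prod G xs = foldr (\<lambda>x y. x \<otimes>\<^bsub>G\<^esub> y) xs \<one>\<^bsub>G\<^esub>"

definition gen_tuples :: "('a, 'b) monoid_scheme \<Rightarrow> 'a set list \<Rightarrow> 'a list set" where
  "gen_tuples G Cs = {\<sigma>s. length \<sigma>s = length Cs \<and> (\<forall>j < length Cs. \<sigma>s ! j \<in> Cs ! j)
      \<and> generate G (set \<sigma>s) = carrier G \<and> list_prod G \<sigma>s = \<one>\<^bsub>G\<^esub>}"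

definition sim_conj :: "('a, 'b) monoid_scheme \<Rightarrow> ('a list \<times> 'a list) set" where
  "sim_conj G = {(\<sigma>s, \<tau>s). \<exists>g \<in> carrier G.
      \<tau>s = map (\<lambda>s. g \<otimes>\<^bsub>G\<^esub> s \<otimes>\<^bsub>G\<^esub> inv\<^bsub>G\<^esub> g) \<sigma>s}"

definition Sigma_i :: "('a, 'b) monoid_scheme \<Rightarrow> 'a set list \<Rightarrow> 'a list set set" where
  "Sigma_i G Cs = gen_tuples G Cs // (sim_conj G \<inter> (gen_tuples G Cs \<times> gen_tuples G Cs))"

definition l_i :: "('a, 'b) monoid_scheme \<Rightarrow> 'a set list \<Rightarrow> nat" where
  "l_i G Cs = card (Sigma_i G Cs)"

end

theory Submission
  imports Defs
begin

definition cj :: "('a, 'b) monoid_scheme \<Rightarrow> 'a \<Rightarrow> 'a \<Rightarrow> 'a" where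
  "cj G g s = g \<otimes>\<^bsub>G\<^esub> s \<otimes>\<^bsub>G\<^esub> inv\<^bsub>G\<^esub> g"

context group
begin

lemma inv_cancel_l [simp]: "x \<in> carrier G \<Longrightarrow> y \<in> carrier G \<Longrightarrow> inv x \<otimes> (x \<otimes> y) = y"
  by (simp add: m_assoc[symmetric])

lemma inv_cancel_r [simp]: "x \<in> carrier G \<Longrightarrow> y \<in> carrier G \<Longrightarrow> x \<otimes> (inv x \<otimes> y) = y"
  by (simp add: m_assoc[symmetric])

lemma cj_carrier: "g \<in> carrier G \<Longrightarrow> s \<in> carrier G \<Longrightarrow> cj G g s \<in> carrier G"
  by (simp add: cj_def)

lemma cj_mult: "g \<in> carrier G \<Longrightarrow> a \<in> carrier G \<Longrightarrow> b \<in> carrier G \<Longrightarrow>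
  cj G g (a \<otimes> b) = cj G g a \<otimes> cj G g b"
  by (simp add: cj_def m_assoc)

lemma cj_inv: "g \<in> carrier G \<Longrightarrow> a \<in> carrier G \<Longrightarrow> cj G g (inv a) = inv (cj G g a)"
  by (simp add: cj_def inv_mult_group m_assoc)

lemma cj_one: "g \<in> carrier G \<Longrightarrow> cj G g \<one> = \<one>"
  by (simp add: cj_def)

lemma cj_cj: "g \<in> carrier G \<Longrightarrow> h \<in> carrier G \<Longrightarrow> a \<in> carrier G \<Longrightarrow> cj G g (cj G h a) = cj G (g \<otimes> h) a"
  by (simp add: cj_def inv_mult_group m_assoc)

lemma cj_id: "a \<in> carrier G \<Longrightarrow> cj G \<one> a = a"
  by (simp add: cj_def)

lemma conj_class_sub: "x \<in> carrier G \<Longrightarrow> conj_class G x \<subseteq> carrier G"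
  unfolding conj_class_def by auto

lemma conj_class_cj: "x \<in> carrier G \<Longrightarrow> s \<in> conj_class G x \<Longrightarrow> g \<in> carrier G \<Longrightarrow> cj G g s \<in> conj_class G x"
proof -
  assume x: "x \<in> carrier G" and s: "s \<in> conj_class G x" and g: "g \<in> carrier G"
  then obtain h where h: "h \<in> carrier G" "s = h \<otimes> x \<otimes> inv h" unfolding conj_class_def by auto
  have "cj G g s = cj G g (cj G h x)" using h by (simp add: cj_def)
  also have "\<dots> = cj G (g \<otimes> h) x" using cj_cj g h x by simp
  finally show ?thesis unfolding conj_class_def cj_def using g h by auto
qed

lemma list_prod_append: "set xs \<subseteq> carrier G \<Longrightarrow> set ys \<subseteq> carrier G \<Longrightarrow>
  list_prod G (xs @ ys) = list_prod G xs \<otimes> list_prod G ys"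
proof (induction xs)
  case Nil then show ?case by (simp add: list_prod_def)
next
  case (Cons a xs)
  have c: "list_prod G xs \<in> carrier G" "list_prod G ys \<in> carrier G"
  proof -
    have "\<And>zs. set zs \<subseteq> carrier G \<Longrightarrow> list_prod G zs \<in> carrier G"
      subgoal for zs by (induction zs) (auto simp: list_prod_def)
      done
    then show "list_prod G xs \<in> carrier G" "list_prod G ys \<in> carrier G" using Cons by auto
  qed
  then show ?case using Cons by (simp add: list_prod_def m_assoc)
qed

lemma list_prod_carrier: "set zs \<subseteq> carrier G \<Longrightarrow> list_prod G zs \<in> carrier G"
  by (induction zs) (auto simp: list_prod_def)

lemma list_prod_cj: "g \<in> carrier G \<Longrightarrow> set xs \<subseteq> carrier G \<Longrightarrow>
  list_prod G (map (cj G g) xs) = cj G g (list_prod G xs)"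
proof (induction xs)
  case Nil then show ?case by (simp add: list_prod_def cj_one)
next
  case (Cons a xs)
  then show ?case using list_prod_carrier[of xs]
    by (simp add: list_prod_def cj_mult)
qed

lemma generate_cj: "x \<in> generate G S \<Longrightarrow> g \<in> carrier G \<Longrightarrow> S \<subseteq> carrier G \<Longrightarrow>
   cj G g x \<in> generate G (cj G g ` S)"
proof (induction x rule: generate.induct)
  case one then show ?case by (simp add: cj_one generate.one)
next
  case (incl h) then show ?case by (simp add: generate.incl)
next
  case (inv h) then show ?case
    by (metis cj_inv generate.inv image_eqI subsetD)
next
  case (eng h1 h2) then show ?case
    by (metis cj_mult generate.eng generate_in_carrier)
qed

lemma generate_cj_full: "g \<in> carrier G \<Longrightarrow> S \<subseteq> carrier G \<Longrightarrow> generate G S = carrier G \<Longrightarrow>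
   generate G (cj G g ` S) = carrier G"
proof
  assume g: "g \<in> carrier G" and S: "S \<subseteq> carrier G" and gen: "generate G S = carrier G"
  have "cj G g ` S \<subseteq> carrier G" using S g cj_carrier by auto
  then show "generate G (cj G g ` S) \<subseteq> carrier G"
    using generate_incl by auto
  show "carrier G \<subseteq> generate G (cj G g ` S)"
  proof
    fix x assume x: "x \<in> carrier G"
    have "cj G (inv g) x \<in> generate G S" using gen x g cj_carrier by simp
    then have "cj G g (cj G (inv g) x) \<in> generate G (cj G g ` S)" using generate_cj g S by blast
    then show "x \<in> generate G (cj G g ` S)" using cj_cj[of g "inv g" x] g x cj_id by simp
  qed
qed

lemma commute_generate: "x \<in> generate G S \<Longrightarrow> c \<in> carrier G \<Longrightarrow> S \<subseteq> carrier G \<Longrightarrow> (\<forall>s\<in>S. c \<otimes> s = s \<otimes> c) \<Longrightarrow>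
   c \<otimes> x = x \<otimes> c"
proof (induction x rule: generate.induct)
  case one then show ?case by simp
next
  case (incl h) then show ?case by simp
next
  case (inv h)
  then have h: "h \<in> carrier G" "c \<otimes> h = h \<otimes> c" and cc: "c \<in> carrier G" by auto
  have "c \<otimes> inv h = inv h \<otimes> (h \<otimes> c) \<otimes> inv h" using h(1) cc by (simp add: m_assoc)
  also have "\<dots> = inv h \<otimes> (c \<otimes> h) \<otimes> inv h" using h by simp
  also have "\<dots> = inv h \<otimes> c" using h(1) cc by (simp add: m_assoc)
  finally show ?case .
next
  case (eng h1 h2)
  have c: "h1 \<in> carrier G" "h2 \<in> carrier G" "c \<in> carrier G" using eng generate_in_carrier by auto
  have e1: "c \<otimes> h1 = h1 \<otimes> c" and e2: "c \<otimes> h2 = h2 \<otimes> c" using eng by auto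
  have "c \<otimes> (h1 \<otimes> h2) = (c \<otimes> h1) \<otimes> h2" using c by (simp add: m_assoc)
  also have "\<dots> = h1 \<otimes> (c \<otimes> h2)" using c e1 by (simp add: m_assoc)
  also have "\<dots> = (h1 \<otimes> h2) \<otimes> c" using c e2 by (simp add: m_assoc)
  finally show ?case .
qed

lemma cj_inj:
  assumes center: "group_center G = {\<one>}"
    and S: "S \<subseteq> carrier G" and gen: "generate G S = carrier G"
    and g: "g \<in> carrier G" and h: "h \<in> carrier G"
    and eq: "\<forall>s\<in>S. cj G g s = cj G h s"
  shows "g = h"
proof -
  define c where "c = inv h \<otimes> g"
  have cc: "c \<in> carrier G" using g h c_def by simp
  have comm: "\<forall>s\<in>S. c \<otimes> s = s \<otimes> c"
  proof
    fix s assume s: "s \<in> S"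
    then have sc: "s \<in> carrier G" using S by auto
    have "g \<otimes> s \<otimes> inv g = h \<otimes> s \<otimes> inv h" using eq s by (simp add: cj_def)
    then have "inv h \<otimes> (g \<otimes> s \<otimes> inv g) \<otimes> g = inv h \<otimes> (h \<otimes> s \<otimes> inv h) \<otimes> g" by simp
    then show "c \<otimes> s = s \<otimes> c" using g h sc unfolding c_def by (simp add: m_assoc)
  qed
  have "\<forall>x\<in>carrier G. c \<otimes> x = x \<otimes> c"
    using commute_generate[OF _ cc S comm] gen by auto
  then have "c \<in> group_center G" using cc unfolding group_center_def by auto
  then have "c = \<one>" using center by auto
  then show ?thesis unfolding c_def using g h
    by (metis inv_closed inv_inv l_inv_ex one_closed r_one m_assoc r_inv) 
qed

end

lemma class_vector_sub:
  fixes G (structure)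
  assumes "group G" "class_vector G Cs" "j < length Cs"
  shows "Cs ! j \<subseteq> carrier G"
proof -
  interpret group G by fact
  have "nontriv_class G (Cs ! j)" using assms unfolding class_vector_def by auto
  then obtain x where "x \<in> carrier G" "Cs ! j = conj_class G x" unfolding nontriv_class_def by auto
  then show ?thesis using conj_class_sub by auto
qed

lemma class_vector_cj:
  fixes G (structure)
  assumes "group G" "class_vector G Cs" "j < length Cs" "s \<in> Cs ! j" "g \<in> carrier G"
  shows "cj G g s \<in> Cs ! j"
proof -
  interpret group G by fact
  have "nontriv_class G (Cs ! j)" using assms unfolding class_vector_def by auto
  then obtain x where "x \<in> carrier G" "Cs ! j = conj_class G x" unfolding nontriv_class_def by auto
  then show ?thesis using conj_class_cj assms by auto
qed

lemma gt_carrier: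
  fixes G (structure)
  assumes "group G" "class_vector G Cs" "\<sigma> \<in> gen_tuples G Cs"
  shows "set \<sigma> \<subseteq> carrier G"
proof
  fix x assume "x \<in> set \<sigma>"
  then obtain j where j: "j < length \<sigma>" "\<sigma> ! j = x" by (auto simp: in_set_conv_nth)
  then show "x \<in> carrier G" using assms class_vector_sub[OF assms(1,2), of j]
    unfolding gen_tuples_def by auto
qed

lemma finite_gt:
  fixes G (structure)
  assumes "group G" "finite (carrier G)" "class_vector G Cs"
  shows "finite (gen_tuples G Cs)"
proof -
  have "gen_tuples G Cs \<subseteq> {xs. set xs \<subseteq> carrier G \<and> length xs = length Cs}"
    using gt_carrier[OF assms(1,3)] unfolding gen_tuples_def by auto
  moreover have "finite {xs. set xs \<subseteq> carrier G \<and> length xs = length Cs}"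
    using finite_lists_length_eq[OF assms(2)] by simp
  ultimately show ?thesis using finite_subset by blast
qed

lemma gt_cj:
  fixes G (structure)
  assumes "group G" "class_vector G As" "\<tau> \<in> gen_tuples G As" "g \<in> carrier G"
  shows "map (cj G g) \<tau> \<in> gen_tuples G As"
proof -
  interpret group G by fact
  have st: "set \<tau> \<subseteq> carrier G" using gt_carrier assms by blast
  have t: "length \<tau> = length As" "\<forall>j<length As. \<tau> ! j \<in> As ! j"
     "generate G (set \<tau>) = carrier G" "list_prod G \<tau> = \<one>"
    using assms(3) unfolding gen_tuples_def by auto
  have "\<forall>j<length As. map (cj G g) \<tau> ! j \<in> As ! j"
  proof (intro allI impI)
    fix j assume j: "j < length As"
    then have "\<tau> ! j \<in> As ! j" using t(2) by blast
    then have "cj G g (\<tau> ! j) \<in> As ! j" using class_vector_cj[OF assms(1,2) j _ assms(4)] by blast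
    then show "map (cj G g) \<tau> ! j \<in> As ! j" using j t(1) by simp
  qed
  moreover have "generate G (set (map (cj G g) \<tau>)) = carrier G"
    using generate_cj_full[OF assms(4) st t(3)] by (simp only: set_map)
  moreover have "list_prod G (map (cj G g) \<tau>) = \<one>"
    using list_prod_cj[OF assms(4) st] t(4) cj_one assms(4) by simp
  ultimately show ?thesis using t(1) unfolding gen_tuples_def by simp
qed

lemma gt_app:
  fixes G (structure)
  assumes "group G" "class_vector G As" "class_vector G Bs"
    "\<tau> \<in> gen_tuples G As" "\<sigma> \<in> gen_tuples G Bs" "g \<in> carrier G"
  shows "map (cj G g) \<tau> @ \<sigma> \<in> gen_tuples G (As @ Bs)"
proof -
  interpret group G by fact
  have t': "map (cj G g) \<tau> \<in> gen_tuples G As" using gt_cj[OF assms(1,2,4,6)] .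
  let ?t = "map (cj G g) \<tau>"
  have st: "set ?t \<subseteq> carrier G" using gt_carrier[OF assms(1,2) t'] .
  have ss: "set \<sigma> \<subseteq> carrier G" using gt_carrier[OF assms(1,3,5)] .
  have t: "length ?t = length As" "\<forall>j<length As. ?t ! j \<in> As ! j"
     "list_prod G ?t = \<one>"
    using t' unfolding gen_tuples_def by auto
  have s: "length \<sigma> = length Bs" "\<forall>j<length Bs. \<sigma> ! j \<in> Bs ! j"
     "generate G (set \<sigma>) = carrier G" "list_prod G \<sigma> = \<one>"
    using assms(5) unfolding gen_tuples_def by auto
  have "\<forall>j<length (As @ Bs). (?t @ \<sigma>) ! j \<in> (As @ Bs) ! j"
  proof (intro allI impI)
    fix j assume j: "j < length (As @ Bs)"
    show "(?t @ \<sigma>) ! j \<in> (As @ Bs) ! j"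
    proof (cases "j < length As")
      case True
      then have "(?t @ \<sigma>) ! j = ?t ! j" "(As @ Bs) ! j = As ! j" using t(1) by (simp_all add: nth_append)
      then show ?thesis using t(2) True by simp
    next
      case False
      then have "(?t @ \<sigma>) ! j = \<sigma> ! (j - length As)" "(As @ Bs) ! j = Bs ! (j - length As)"
        using t(1) by (simp_all add: nth_append)
      moreover have "j - length As < length Bs" using j False by simp
      ultimately show ?thesis using s(2) by simp
    qed
  qed
  moreover have "generate G (set (?t @ \<sigma>)) = carrier G"
  proof
    have "set (?t @ \<sigma>) \<subseteq> carrier G" using st ss by simp
    then show "generate G (set (?t @ \<sigma>)) \<subseteq> carrier G" by (rule generate_incl)
    have "generate G (set \<sigma>) \<subseteq> generate G (set (?t @ \<sigma>))" by (rule mono_generate) simp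
    then show "carrier G \<subseteq> generate G (set (?t @ \<sigma>))" using s(3) by simp
  qed
  moreover have "list_prod G (?t @ \<sigma>) = \<one>"
    using list_prod_append[OF st ss] t(3) s(4) by simp
  ultimately show ?thesis using t(1) s(1) unfolding gen_tuples_def by simp
qed

lemma gt_nonempty:
  fixes G (structure)
  assumes "l_i G Ds \<ge> 1"
  shows "gen_tuples G Ds \<noteq> {}"
proof
  assume "gen_tuples G Ds = {}"
  then show False using assms unfolding l_i_def Sigma_i_def by simp
qed

lemma Q:
  fixes G :: "('a, 'b) monoid_scheme" (structure) and n0 :: nat
  assumes grp: "group G" and fin: "finite (carrier G)"
    and cen: "group_center G = {\<one>\<^bsub>G\<^esub>}"
    and hyp: "\<And>Ds. class_vector G Ds \<Longrightarrow> n0 \<le> length Ds \<Longrightarrow> length Ds \<le> 2 * n0 - 1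
           \<Longrightarrow> l_i G Ds \<ge> 1"
  shows "k \<ge> 1 \<Longrightarrow> class_vector G Cs \<Longrightarrow> length Cs = k * n0 + l \<Longrightarrow> l < n0
     \<Longrightarrow> card (gen_tuples G Cs) \<ge> order G ^ k"
proof (induction k arbitrary: Cs)
  case 0 then show ?case by simp
next
  case (Suc k)
  interpret group G by fact
  show ?case
  proof (cases "k = 0")
    case True
    then have "n0 \<le> length Cs" "length Cs \<le> 2 * n0 - 1" using Suc.prems by auto
    then obtain \<tau> where \<tau>: "\<tau> \<in> gen_tuples G Cs" using gt_nonempty hyp Suc.prems by blast
    have st: "set \<tau> \<subseteq> carrier G" using gt_carrier grp Suc.prems \<tau> by blast
    have gen: "generate G (set \<tau>) = carrier G" using \<tau> unfolding gen_tuples_def by auto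
    have sub: "(\<lambda>g. map (cj G g) \<tau>) ` carrier G \<subseteq> gen_tuples G Cs"
      using gt_cj[OF grp Suc.prems(2) \<tau>] by auto
    have inj: "inj_on (\<lambda>g. map (cj G g) \<tau>) (carrier G)"
    proof (rule inj_onI)
      fix g h assume "g \<in> carrier G" "h \<in> carrier G" "map (cj G g) \<tau> = map (cj G h) \<tau>"
      then show "g = h" using cj_inj[OF cen st gen] by (auto simp: map_eq_conv)
    qed
    have "order G = card ((\<lambda>g. map (cj G g) \<tau>) ` carrier G)"
      using card_image[OF inj] unfolding order_def by simp
    also have "\<dots> \<le> card (gen_tuples G Cs)"
      using card_mono[OF finite_gt[OF grp fin Suc.prems(2)] sub] .
    finally show ?thesis using True by simp
  next
    case False
    define As where "As = take n0 Cs"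
    define Bs where "Bs = drop n0 Cs"
    have CsAB: "Cs = As @ Bs" unfolding As_def Bs_def by simp
    have lenA: "length As = n0" using Suc.prems unfolding As_def by auto
    have lenB: "length Bs = k * n0 + l" using Suc.prems unfolding Bs_def by auto
    have cvA: "class_vector G As" using Suc.prems(2) unfolding As_def class_vector_def
      by (meson in_set_takeD)
    have cvB: "class_vector G Bs" using Suc.prems(2) unfolding Bs_def class_vector_def
      by (meson in_set_dropD)
    have IH: "order G ^ k \<le> card (gen_tuples G Bs)"
      using Suc.IH[OF _ cvB lenB Suc.prems(4)] False by simp
    obtain \<tau> where \<tau>: "\<tau> \<in> gen_tuples G As" using gt_nonempty hyp[OF cvA] lenA Suc.prems by fastforce
    have st: "set \<tau> \<subseteq> carrier G" using gt_carrier grp cvA \<tau> by blast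
    have gen: "generate G (set \<tau>) = carrier G" using \<tau> unfolding gen_tuples_def by auto
    define f where "f = (\<lambda>(g, \<sigma>). map (cj G g) \<tau> @ \<sigma>)"
    have sub: "f ` (carrier G \<times> gen_tuples G Bs) \<subseteq> gen_tuples G Cs"
      unfolding f_def CsAB using gt_app[OF grp cvA cvB \<tau>] by auto
    have inj: "inj_on f (carrier G \<times> gen_tuples G Bs)"
    proof (rule inj_onI)
      fix x y assume x: "x \<in> carrier G \<times> gen_tuples G Bs" and y: "y \<in> carrier G \<times> gen_tuples G Bs"
        and e: "f x = f y"
      obtain g \<sigma> h \<sigma>' where xy: "x = (g, \<sigma>)" "y = (h, \<sigma>')" by force
      have "map (cj G g) \<tau> = map (cj G h) \<tau> \<and> \<sigma> = \<sigma>'"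
        using e unfolding f_def xy by (simp add: append_eq_append_conv)
      then show "x = y" using cj_inj[OF cen st gen, of g h] x y xy by (auto simp: map_eq_conv)
    qed
    have "order G ^ Suc k = order G * order G ^ k" by simp
    also have "\<dots> \<le> order G * card (gen_tuples G Bs)" using IH by simp
    also have "\<dots> = card (carrier G \<times> gen_tuples G Bs)"
      by (simp add: card_cartesian_product order_def)
    also have "\<dots> = card (f ` (carrier G \<times> gen_tuples G Bs))" using card_image[OF inj] by simp
    also have "\<dots> \<le> card (gen_tuples G Cs)"
      using card_mono[OF finite_gt[OF grp fin Suc.prems(2)] sub] .
    finally show ?thesis .
  qed
qed

lemma prop13_aux:
  fixes G :: "('a, 'b) monoid_scheme" (structure) and n0 :: nat
  assumes "group G" and "finite (carrier G)"
    and "group_center G = {\<one>\<^bsub>G\<^esub>}"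
    and "n0 \<ge> 3"
    and "\<And>Ds. class_vector G Ds \<Longrightarrow> n0 \<le> length Ds \<Longrightarrow> length Ds \<le> 2 * n0 - 1
           \<Longrightarrow> l_i G Ds \<ge> 1"
  shows "\<forall>Cs k l. class_vector G Cs \<and> length Cs = k * n0 + l \<and> l < n0 \<and> k \<ge> 2
           \<longrightarrow> l_i G Cs \<ge> order G ^ (k - 1)"
proof (intro allI impI)
  fix Cs k l assume a: "class_vector G Cs \<and> length Cs = k * n0 + l \<and> l < n0 \<and> k \<ge> 2"
  interpret group G by fact
  note grp = assms(1) and fin = assms(2) and cen = assms(3) and hyp = assms(5)
  define As where "As = take n0 Cs"
  define Bs where "Bs = drop n0 Cs"
  have CsAB: "Cs = As @ Bs" unfolding As_def Bs_def by simp
  have lenA: "length As = n0" using a unfolding As_def by (cases k) auto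
  have lenB: "length Bs = (k - 1) * n0 + l" using a unfolding Bs_def by (cases k) auto
  have cvA: "class_vector G As" using a unfolding As_def class_vector_def
    by (meson in_set_takeD)
  have cvB: "class_vector G Bs" using a unfolding Bs_def class_vector_def
    by (meson in_set_dropD)
  have QB: "order G ^ (k - 1) \<le> card (gen_tuples G Bs)"
    using Q[OF grp fin cen hyp, where k="k - 1" and Cs=Bs and l=l] a cvB lenB by auto
  obtain \<tau> where \<tau>: "\<tau> \<in> gen_tuples G As" using gt_nonempty hyp[OF cvA] lenA assms(4) by fastforce
  have st: "set \<tau> \<subseteq> carrier G" using gt_carrier grp cvA \<tau> by blast
  have gen: "generate G (set \<tau>) = carrier G" using \<tau> unfolding gen_tuples_def by auto
  have t1: "map (cj G \<one>) \<tau> = \<tau>"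
    by (rule map_idI) (simp add: cj_id subsetD[OF st])
  define TT where "TT = gen_tuples G Cs"
  define RR where "RR = sim_conj G \<inter> (TT \<times> TT)"
  have inX: "\<sigma> \<in> gen_tuples G Bs \<Longrightarrow> \<tau> @ \<sigma> \<in> TT" for \<sigma>
    using gt_app[OF grp cvA cvB \<tau>, of \<sigma> \<one>] t1 unfolding TT_def CsAB by simp
  define \<phi> where "\<phi> = (\<lambda>\<sigma>. RR `` {\<tau> @ \<sigma>})"
  have sub: "\<phi> ` gen_tuples G Bs \<subseteq> Sigma_i G Cs"
    unfolding \<phi>_def Sigma_i_def RR_def TT_def[symmetric] using inX by (auto intro: quotientI)
  have finS: "finite (Sigma_i G Cs)"
    unfolding Sigma_i_def TT_def[symmetric] RR_def[symmetric]
    by (rule finite_quotient) (auto simp: RR_def TT_def finite_gt[OF grp fin] a)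
  have refl: "x \<in> TT \<Longrightarrow> (x, x) \<in> RR" for x
  proof -
    assume x: "x \<in> TT"
    then have "set x \<subseteq> carrier G" using gt_carrier grp a unfolding TT_def by blast
    then have "map (\<lambda>s. \<one> \<otimes> s \<otimes> inv \<one>) x = x" by (intro map_idI) (simp add: subsetD)
    then have "(x, x) \<in> sim_conj G" unfolding sim_conj_def by force
    then show ?thesis using x unfolding RR_def by blast
  qed
  have inj: "inj_on \<phi> (gen_tuples G Bs)"
  proof (rule inj_onI)
    fix \<sigma> \<sigma>' assume s: "\<sigma> \<in> gen_tuples G Bs" and s': "\<sigma>' \<in> gen_tuples G Bs" and e: "\<phi> \<sigma> = \<phi> \<sigma>'"
    have "(\<tau> @ \<sigma>', \<tau> @ \<sigma>') \<in> RR" using refl inX s' by blast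
    then have "(\<tau> @ \<sigma>, \<tau> @ \<sigma>') \<in> RR" using e unfolding \<phi>_def by blast
    then have "(\<tau> @ \<sigma>, \<tau> @ \<sigma>') \<in> sim_conj G" unfolding RR_def by blast
    then have "\<exists>g\<in>carrier G. \<tau> @ \<sigma>' = map (cj G g) (\<tau> @ \<sigma>)"
      unfolding sim_conj_def cj_def[abs_def] by (simp only: mem_Collect_eq case_prod_conv)
    then obtain g where g: "g \<in> carrier G" "\<tau> @ \<sigma>' = map (cj G g) (\<tau> @ \<sigma>)" by blast
    then have "\<tau> = map (cj G g) \<tau>" and ss: "\<sigma>' = map (cj G g) \<sigma>"
      by (simp_all add: append_eq_append_conv)
    then have "map (cj G g) \<tau> = map (cj G \<one>) \<tau>" using t1 by simp
    then have "\<forall>s\<in>set \<tau>. cj G g s = cj G \<one> s" by (simp only: map_eq_conv)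
    then have "g = \<one>" using cj_inj[OF cen st gen g(1)] by simp
    have "set \<sigma> \<subseteq> carrier G" using gt_carrier grp cvB s by blast
    then have "map (cj G \<one>) \<sigma> = \<sigma>" by (intro map_idI) (simp add: cj_id subsetD)
    then show "\<sigma> = \<sigma>'" using ss \<open>g = \<one>\<close> by simp
  qed
  have "order G ^ (k - 1) \<le> card (gen_tuples G Bs)" by (rule QB)
  also have "\<dots> \<le> card (Sigma_i G Cs)" using card_inj_on_le[OF inj sub finS] .
  finally show "l_i G Cs \<ge> order G ^ (k - 1)" unfolding l_i_def .
qed



theorem proposition13:
  fixes G :: "('a, 'b) monoid_scheme" and n0 :: nat
  assumes "group G" and "finite (carrier G)"
    and "group_center G = {\<one>\<^bsub>G\<^esub>}"
    and "n0 \<ge> 3"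
    and "\<And>Ds. class_vector G Ds \<Longrightarrow> n0 \<le> length Ds \<Longrightarrow> length Ds \<le> 2 * n0 - 1
           \<Longrightarrow> l_i G Ds \<ge> 1"
  shows "\<forall>Cs k l. class_vector G Cs \<and> length Cs = k * n0 + l \<and> l < n0 \<and> k \<ge> 2
           \<longrightarrow> l_i G Cs \<ge> order G ^ (k - 1)"
  using prop13_aux[OF assms] by blast

end
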